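(* Let $p\in(0,1)$ and let $Y_1,Y_2,\dots$ be i.i.d. with $Y_i=1-\mathrm{Geo}(p)$. Let $f(x)=(2-x)^{2-x}p(1-p)^{1-x}(1-x)^{x-1}$ for $x\le1$ (with $0^0=1$). (a) There is an absolute constant $C$ such that for every $a\in[2-p^{-1},1]$ and every positive integer $m$, $\Pr[Y_1+\dots+Y_m\ge am]\le Cmf(a)^m$. (b) As $m\to\infty$, uniformly for all $a\in[0,1]$, $\Pr[Y_1+\dots+Y_m\ge am]\ge[f(a)-o(1)]^m$. (c) If $p\ge1/2$, then as $m\to\infty$, uniformly for all $a\in[0,2-\frac1p]$, $\Pr[Y_1+\dots+Y_m\ge am]\ge[1-o(1)]^m$.
   Context: $\mathrm{Geo}(p)$ has $\Pr[\mathrm{Geo}(p)=k]=(1-p)^kp$ for integers $k\ge0$. *)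

theory Defs
  imports "HOL-Probability.Probability"
begin

definition Y_pmf :: "real \<Rightarrow> real pmf" where
  "Y_pmf p = map_pmf (\<lambda>k. 1 - real k) (geometric_pmf p)"

fun Ysum_pmf :: "real \<Rightarrow> nat \<Rightarrow> real pmf" where
  "Ysum_pmf p 0 = return_pmf 0"
| "Ysum_pmf p (Suc m) =
     bind_pmf (Y_pmf p) (\<lambda>y. bind_pmf (Ysum_pmf p m) (\<lambda>s. return_pmf (y + s)))"

definition pow0 :: "real \<Rightarrow> real \<Rightarrow> real" where
  "pow0 b e = (if b = 0 then (if e = 0 then 1 else 0) else b powr e)"

definition f13 :: "real \<Rightarrow> real \<Rightarrow> real" where
  "f13 p x = pow0 (2 - x) (2 - x) * p * pow0 (1 - p) (1 - x) * pow0 (1 - x) (x - 1)"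

end

theory Submission
  imports Defs
begin


lemma Ysum_nb: "Ysum_pmf p m = map_pmf (\<lambda>k. real m - real k) (neg_binomial_pmf m p)"
proof (induction m)
  case 0 then show ?case by simp
next
  case (Suc m)
  show ?case
    unfolding Ysum_pmf.simps Suc neg_binomial_pmf_Suc Y_pmf_def
    by (simp add: pair_pmf_def map_pmf_def bind_assoc_pmf bind_return_pmf algebra_simps)
qed

lemma prob_eq: "measure_pmf.prob (Ysum_pmf p m) {s. s \<ge> a * real m}
   = measure_pmf.prob (neg_binomial_pmf m p) {k. real k \<le> (1 - a) * real m}"
  unfolding Ysum_nb measure_map_pmf
  by (rule arg_cong[where f="measure_pmf.prob _"]) (auto simp: algebra_simps)

lemma set_floor: assumes "0 \<le> x" shows "{k::nat. real k \<le> x} = {..nat \<lfloor>x\<rfloor>}"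
proof safe
  fix k assume "k \<le> nat \<lfloor>x\<rfloor>"
  then have "real k \<le> real (nat \<lfloor>x\<rfloor>)" by simp
  also have "\<dots> = of_int \<lfloor>x\<rfloor>" using assms by simp
  also have "\<dots> \<le> x" by simp
  finally show "real k \<le> x" .
qed (simp add: le_nat_floor)



lemma f13_eq: assumes "0 < p" "p < 1" "b \<ge> 0"
  shows "f13 p (1 - b) = (1 + b) powr (1 + b) * p * (1 - p) powr b * pow0 b (- b)"
  using assms unfolding f13_def pow0_def by (simp add: algebra_simps)

lemma f13_nonneg: assumes "0 < p" shows "f13 p a \<ge> 0"
  using assms unfolding f13_def pow0_def by simp

lemma nb_prob_atMost: assumes "0 < p" "p < 1"
  shows "measure_pmf.prob (neg_binomial_pmf m p) {..K} = (\<Sum>k\<le>K. real ((k + m - 1) choose k) * p ^ m * (1 - p) ^ k)"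
  using assms by (subst measure_measure_pmf_finite) (auto simp: pmf_neg_binomial)

lemma upper_main:
  assumes p: "0 < p" "p < 1" and b: "0 < b" "b \<le> (1 - p) / p"
  shows "measure_pmf.prob (neg_binomial_pmf m p) {..nat \<lfloor>b * real m\<rfloor>} \<le> f13 p (1 - b) ^ m"
proof -
  define K where "K = nat \<lfloor>b * real m\<rfloor>"
  define r where "r = b / ((1 + b) * (1 - p))"
  define q where "q = b / (1 + b)"
  have rpos: "r > 0" using p b by (simp add: r_def)
  have "b * p \<le> 1 - p" using b p by (simp add: field_simps)
  then have rle: "r \<le> 1" using p b by (simp add: r_def field_simps)
  have q: "0 < q" "q < 1" using b by (auto simp: q_def)
  have qr: "(1 - p) = q / r"
  proof -
    have "b \<noteq> 0" "1 + b \<noteq> 0" "1 - p \<noteq> 0" using p b by auto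
    then show ?thesis by (simp add: q_def r_def)
  qed
  have Kle: "real k \<le> b * real m" if "k \<le> K" for k
    using set_floor[of "b * real m"] b that by (auto simp: K_def)
  have step1: "(1 - p) ^ k \<le> q ^ k * (1 / r) powr (b * real m)" if "k \<le> K" for k
  proof -
    have "(1 - p) ^ k = q ^ k * (1 / r) ^ k" using qr by (simp add: power_divide)
    also have "(1 / r) ^ k = (1 / r) powr real k" using rpos by (simp add: powr_realpow)
    also have "\<dots> \<le> (1 / r) powr (b * real m)"
      by (rule powr_mono) (use Kle[OF that] rpos rle in auto)
    finally show ?thesis using q by (simp add: mult_left_mono)
  qed
  have "measure_pmf.prob (neg_binomial_pmf m p) {..K} = (\<Sum>k\<le>K. real ((k + m - 1) choose k) * p ^ m * (1 - p) ^ k)"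
    by (rule nb_prob_atMost[OF p])
  also have "\<dots> \<le> (\<Sum>k\<le>K. real ((k + m - 1) choose k) * p ^ m * (q ^ k * (1 / r) powr (b * real m)))"
    by (intro sum_mono mult_left_mono step1) (use p in auto)
  also have "\<dots> = p ^ m * (1 / r) powr (b * real m) * (\<Sum>k\<le>K. real ((k + m - 1) choose k) * q ^ k)"
    by (simp add: sum_distrib_left algebra_simps)
  also have "(\<Sum>k\<le>K. real ((k + m - 1) choose k) * q ^ k) \<le> (1 + b) ^ m"
  proof -
    define S where "S = (\<Sum>k\<le>K. real ((k + m - 1) choose k) * q ^ k)"
    have "measure_pmf.prob (neg_binomial_pmf m (1 - q)) {..K} = (1 - q) ^ m * S"
      using nb_prob_atMost[of "1 - q" m K] q by (simp add: S_def sum_distrib_left algebra_simps)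
    then have le1: "(1 - q) ^ m * S \<le> 1" by (metis measure_pmf.prob_le_1)
    have "1 - q = 1 / (1 + b)" using b by (simp add: q_def field_simps)
    then have "(1 - q) ^ m * (1 + b) ^ m = 1" using b by (simp add: power_divide)
    then have "S = (1 - q) ^ m * S * (1 + b) ^ m" by (simp add: algebra_simps)
    also have "\<dots> \<le> 1 * (1 + b) ^ m" by (rule mult_right_mono[OF le1]) (use b in auto)
    finally show ?thesis by (simp add: S_def)
  qed
  then have "p ^ m * (1 / r) powr (b * real m) * (\<Sum>k\<le>K. real ((k + m - 1) choose k) * q ^ k)
      \<le> p ^ m * (1 / r) powr (b * real m) * (1 + b) ^ m"
    by (intro mult_left_mono) (use p in auto)
  also have "\<dots> = f13 p (1 - b) ^ m"
  proof -
    have "(1 / r) powr b = (1 + b) powr b * (1 - p) powr b * b powr (- b)"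
      using p b by (simp add: r_def powr_divide powr_mult powr_minus divide_inverse inverse_powr)
    then have G: "f13 p (1 - b) = p * (1 + b) * (1 / r) powr b"
      using p b by (simp add: f13_eq pow0_def powr_add)
    have "(1 / r) powr (b * real m) = ((1 / r) powr b) ^ m"
      using rpos by (simp add: powr_power mult.commute)
    then show ?thesis unfolding G by (simp add: power_mult_distrib)
  qed
  finally show ?thesis unfolding K_def .
qed



lemma choose_ratio: "Suc j * (n choose Suc j) = (n - j) * (n choose j)"
proof -
  have "Suc j * (n choose Suc j) = n * (n - 1 choose j)" by (rule binomial_absorption)
  moreover have "(n - j) * (n choose j) = n * (n - 1 choose j)" by (rule binomial_absorb_comp)
  ultimately show ?thesis by simp
qed

lemma maxterm:
  fixes K m :: nat assumes m: "m \<ge> 1"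
  shows "real (K + m) ^ (K + m) \<le> real (K + m + 1) * real ((K + m) choose K) * real K ^ K * real m ^ m"
proof -
  define n where "n = K + m"
  define T where "T j = real (n choose j) * real K ^ j * real m ^ (n - j)" for j
  have rec: "T (Suc j) * (real j + 1) * real m = T j * (real n - real j) * real K" if "j < n" for j
  proof -
    have c: "(real j + 1) * real (n choose Suc j) = (real n - real j) * real (n choose j)"
      using choose_ratio[of j n] that by (metis of_nat_Suc of_nat_diff of_nat_mult add.commute less_imp_le)
    have e: "real m ^ (n - j) = real m ^ (n - Suc j) * real m"
      using that by (metis Suc_diff_Suc power_Suc2)
    have "T (Suc j) * (real j + 1) * real m = ((real j + 1) * real (n choose Suc j)) * real K ^ Suc j * (real m ^ (n - Suc j) * real m)"
      unfolding T_def by (simp add: algebra_simps)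
    also have "\<dots> = ((real n - real j) * real (n choose j)) * real K ^ Suc j * real m ^ (n - j)"
      unfolding c e ..
    also have "\<dots> = T j * (real n - real j) * real K"
      unfolding T_def by (simp add: algebra_simps)
    finally show ?thesis .
  qed
  have down: "T (Suc j) \<le> T j" if "K \<le> j" "j < n" for j
  proof -
    have "(real n - real j) * real K \<le> (real j + 1) * real m"
    proof -
      have "real n - real j \<le> real m" using that by (simp add: n_def)
      moreover have "real K \<le> real j + 1" using that by simp
      ultimately have "(real n - real j) * real K \<le> real m * (real j + 1)"
        using that by (intro mult_mono) auto
      then show ?thesis by (simp add: mult.commute)
    qed
    then have "T (Suc j) * ((real j + 1) * real m) \<le> T j * ((real j + 1) * real m)"
      using rec[OF that(2)] mult_left_mono[of "(real n - real j) * real K" "(real j + 1) * real m" "T j"]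
      by (simp add: T_def algebra_simps)
    then show ?thesis using m by (simp add: mult_le_cancel_right)
  qed
  have up: "T j \<le> T (Suc j)" if "j < K" for j
  proof -
    have jn: "j < n" using that by (simp add: n_def)
    have "(real j + 1) * real m \<le> (real n - real j) * real K"
    proof -
      have "real m \<le> real n - real j" using that by (simp add: n_def)
      moreover have "real j + 1 \<le> real K" using that by simp
      ultimately show ?thesis by (subst mult.commute) (intro mult_mono, auto)
    qed
    then have "T j * ((real j + 1) * real m) \<le> T (Suc j) * ((real j + 1) * real m)"
      using rec[OF jn] mult_left_mono[of "(real j + 1) * real m" "(real n - real j) * real K" "T j"]
      by (simp add: T_def algebra_simps)
    then show ?thesis using m by (simp add: mult_le_cancel_right)
  qed
  have ge: "T j \<le> T K" if "K \<le> j" "j \<le> n" for j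
    using that
  proof (induction j)
    case 0 then show ?case by simp
  next
    case (Suc j)
    show ?case
    proof (cases "K = Suc j")
      case True then show ?thesis by simp
    next
      case False
      then have "K \<le> j" "j < n" using Suc.prems by auto
      then show ?thesis using down Suc.IH by (meson less_imp_le order.trans)
    qed
  qed
  have le: "T j \<le> T K" if "j \<le> K" for j
  proof -
    have "T (K - d) \<le> T K" if "d \<le> K" for d
      using that
    proof (induction d)
      case 0 then show ?case by simp
    next
      case (Suc d)
      have "K - Suc d < K" using Suc.prems by simp
      then have "T (K - Suc d) \<le> T (Suc (K - Suc d))" by (rule up)
      also have "Suc (K - Suc d) = K - d" using Suc.prems by simp
      finally show ?case using Suc by simp
    qed
    from this[of "K - j"] that show ?thesis by simp
  qed
  have "real (K + m) ^ n = (\<Sum>j\<le>n. T j)"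
    unfolding T_def by (subst of_nat_add, subst binomial_ring) (simp add: algebra_simps)
  also have "\<dots> \<le> (\<Sum>j\<le>n. T K)"
  proof (intro sum_mono)
    fix j assume "j \<in> {..n}"
    then show "T j \<le> T K" using ge[of j] le[of j] by (cases "K \<le> j") auto
  qed
  also have "\<dots> = real (n + 1) * T K" by simp
  finally show ?thesis unfolding T_def n_def by (simp add: algebra_simps)
qed



lemma xlnx_ge: fixes x :: real assumes "0 < x" shows "x * ln x \<ge> x - 1"
proof -
  have "ln (1 / x) \<le> 1 / x - 1" using assms by (intro ln_le_minus_one) simp
  then have "- ln x \<le> 1 / x - 1" using assms by (simp add: ln_div)
  then have "x * (- ln x) \<le> x * (1 / x - 1)" using assms by (intro mult_left_mono) auto
  then show ?thesis using assms by (simp add: algebra_simps)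
qed

lemma KK_le: fixes x :: real assumes "0 \<le> x"
  shows "real (nat \<lfloor>x\<rfloor>) ^ (nat \<lfloor>x\<rfloor>) \<le> exp 1 * (if x = 0 then 1 else x powr x)"
proof (cases "x = 0")
  case True then show ?thesis by simp
next
  case False
  then have xpos: "x > 0" using assms by simp
  define K where "K = nat \<lfloor>x\<rfloor>"
  have Kx: "real K \<le> x" using assms by (simp add: K_def)
  show ?thesis
  proof (cases "K = 0")
    case True
    have "exp (x - 1) \<le> exp (x * ln x)" using xlnx_ge[OF xpos] by simp
    also have "\<dots> = x powr x" using xpos by (simp add: powr_def)
    finally have "exp (x - 1) \<le> x powr x" .
    moreover have "exp 1 * exp (x - 1) \<ge> 1"
      using xpos by (simp add: exp_add[symmetric])
    ultimately have "1 \<le> exp 1 * x powr x"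
      by (smt (verit) exp_gt_zero mult_left_mono)
    then show ?thesis using True False by (simp add: K_def[symmetric])
  next
    case False
    then have K1: "real K \<ge> 1" by simp
    have "real K ^ K = real K powr real K" using K1 by (simp add: powr_realpow)
    also have "\<dots> \<le> real K powr x" by (rule powr_mono) (use Kx K1 in auto)
    also have "\<dots> \<le> x powr x" by (rule powr_mono2) (use Kx K1 xpos in auto)
    also have "\<dots> \<le> exp 1 * x powr x"
      using xpos by (simp add: mult_le_cancel_right1 one_le_exp_iff)
    finally show ?thesis using \<open>x \<noteq> 0\<close> by (simp add: K_def)
  qed
qed

lemma vv_le: fixes u v :: real assumes "1 \<le> u" "u \<le> v" "v \<le> u + 1"
  shows "v powr v \<le> exp 1 * v * u powr u"
proof -
  have v1: "v \<ge> 1" using assms by simp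
  have "v powr v = v powr u * v powr (v - u)" by (simp add: powr_add[symmetric])
  also have "v powr (v - u) \<le> v powr 1" by (rule powr_mono) (use assms in auto)
  also have "v powr 1 = v" using v1 by simp
  also have "v powr u = u powr u * (v / u) powr u"
    using assms by (simp add: powr_divide)
  also have "(v / u) powr u \<le> (1 + 1 / u) powr u"
    by (rule powr_mono2) (use assms in \<open>auto simp: field_simps\<close>)
  also have "(1 + 1 / u) powr u = exp (u * ln (1 + 1 / u))"
  proof -
    have "1 + 1 / u > 0" using assms by (simp add: add_pos_pos)
    then show ?thesis by (simp add: powr_def)
  qed
  also have "\<dots> \<le> exp 1"
  proof -
    have "ln (1 + 1 / u) \<le> 1 / u" by (rule ln_add_one_self_le_self) (use assms in auto)
    then have "u * ln (1 + 1 / u) \<le> u * (1 / u)" using assms by (intro mult_left_mono) auto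
    then show ?thesis using assms by simp
  qed
  finally show ?thesis using v1 assms
    by (simp add: mult_right_mono mult_left_mono algebra_simps)
qed



definition Q :: "nat \<Rightarrow> real" where "Q m = 4 * exp 2 * real m * (2 * real m + 1)"

lemma f13_pow_identity:
  assumes p: "0 < p" "p < 1" and b: "0 < b" and m: "m \<ge> 1"
  defines "x \<equiv> b * real m"
  shows "f13 p (1 - b) ^ m * (real m ^ m * x powr x) = p ^ m * (1 - p) powr x * (x + real m) powr (x + real m)"
proof -
  have mpos: "real m > 0" using m by simp
  have xpos: "x > 0" using b mpos by (simp add: x_def)
  define L where "L = (1 + b) * ln (1 + b) + ln p + b * ln (1 - p) - b * ln b"
  have f: "f13 p (1 - b) = exp L"
    using p b by (simp add: f13_eq pow0_def powr_def L_def exp_add exp_diff exp_minus field_simps)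
  have lxm: "ln (x + real m) = ln (real m) + ln (1 + b)"
  proof -
    have "x + real m = real m * (1 + b)" by (simp add: x_def algebra_simps)
    then show ?thesis using mpos b by (simp add: ln_mult)
  qed
  have lx: "ln x = ln b + ln (real m)" using b mpos by (simp add: x_def ln_mult)
  have "f13 p (1 - b) ^ m * (real m ^ m * x powr x) = exp (real m * L + real m * ln (real m) + x * ln x)"
    using mpos xpos by (simp add: f exp_add powr_def exp_of_nat_mult[symmetric] powr_realpow[symmetric])
  also have "real m * L + real m * ln (real m) + x * ln x = real m * ln p + x * ln (1 - p) + (x + real m) * ln (x + real m)"
    unfolding lxm lx L_def by (simp add: x_def algebra_simps)
  also have "exp \<dots> = p ^ m * (1 - p) powr x * (x + real m) powr (x + real m)"
    using p xpos mpos by (simp add: exp_add powr_def exp_of_nat_mult)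
  finally show ?thesis .
qed


lemma lower_main:
  assumes p: "0 < p" "p < 1" and b: "0 \<le> b" "b \<le> 1" and m: "m \<ge> 1"
  shows "f13 p (1 - b) ^ m \<le> Q m * pmf (neg_binomial_pmf m p) (nat \<lfloor>b * real m\<rfloor>)"
proof (cases "b = 0")
  case True
  have "f13 p 1 = p" using p by (simp add: f13_def pow0_def)
  moreover have "Q m \<ge> 1"
  proof -
    have "exp 2 \<ge> (1::real)" by simp
    moreover have "real m \<ge> 1" using m by simp
    ultimately have "4 * exp 2 * real m * (2 * real m + 1) \<ge> 1 * 1 * 1 * 1"
      by (intro mult_mono) auto
    then show ?thesis by (simp add: Q_def)
  qed
  ultimately show ?thesis using True p
    by (simp add: pmf_neg_binomial)
next
  case False
  then have bpos: "b > 0" using b by simp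
  define x where "x = b * real m"
  define K where "K = nat \<lfloor>x\<rfloor>"
  define n where "n = K + m"
  have mpos: "real m > 0" using m by simp
  have xpos: "x > 0" using bpos mpos by (simp add: x_def)
  have Kx: "real K \<le> x" using xpos by (simp add: K_def)
  have xK: "x \<le> real K + 1" using xpos unfolding K_def by linarith
  have xm: "x \<le> real m" using b mpos by (simp add: x_def mult_left_le_one_le)
  have Km: "real K \<le> real m" using Kx xm by simp
  define C where "C = real ((K + m - 1) choose K)"
  have P: "pmf (neg_binomial_pmf m p) K = C * p ^ m * (1 - p) ^ K"
    using p by (simp add: pmf_neg_binomial C_def)
  have Cn: "C * real n = real (n choose K) * real m"
  proof -
    have e: "m * (n choose K) = n * ((n - 1) choose K)"
      using binomial_absorb_comp[of n K] by (simp add: n_def)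
    have c: "C = real ((n - 1) choose K)" by (simp add: C_def n_def)
    have "real (m * (n choose K)) = real (n * ((n - 1) choose K))" using e by (rule arg_cong)
    then have "real m * real (n choose K) = real n * C" unfolding c of_nat_mult .
    then show ?thesis by (simp add: mult.commute)
  qed
  have max: "real n ^ n \<le> real (n + 1) * real (n choose K) * real K ^ K * real m ^ m"
    using maxterm[OF m, of K] by (simp add: n_def)
  have Cpos: "C \<ge> 0" by (simp add: C_def)
  have n1: "real n \<ge> 1" using m by (simp add: n_def)
  have vv: "(x + real m) powr (x + real m) \<le> exp 1 * (x + real m) * real n powr real n"
    by (rule vv_le) (use n1 Kx xK in \<open>auto simp: n_def\<close>)
  have nn: "real n powr real n = real n ^ n" using n1 by (simp add: powr_realpow)
  have KK: "real K ^ K \<le> exp 1 * x powr x"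
    using KK_le[of x] xpos by (simp add: K_def)
  have pK: "(1 - p) powr x \<le> (1 - p) ^ K"
  proof -
    have "(1 - p) powr x \<le> (1 - p) powr real K" by (rule powr_mono') (use Kx p in auto)
    then show ?thesis using p by (simp add: powr_realpow)
  qed
  have id: "f13 p (1 - b) ^ m * (real m ^ m * x powr x) = p ^ m * (1 - p) powr x * (x + real m) powr (x + real m)"
    using f13_pow_identity[OF p bpos m] by (simp add: x_def)
  define A where "A = p ^ m * (1 - p) ^ K"
  have A0: "A \<ge> 0" using p by (simp add: A_def)
  have "f13 p (1 - b) ^ m * (real m ^ m * x powr x) * real m
      \<le> p ^ m * (1 - p) ^ K * (exp 1 * (x + real m) * real n ^ n) * real m"
    unfolding id
    by (intro mult_right_mono mult_mono pK vv[unfolded nn] mult_left_mono) (use p xpos in auto)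
  also have "\<dots> = A * (exp 1 * (x + real m)) * (real n ^ n * real m)"
    by (simp add: A_def algebra_simps)
  also have "\<dots> \<le> A * (exp 1 * (x + real m)) * (real (n + 1) * real n * C * real K ^ K * real m ^ m)"
  proof -
    have "real n ^ n * real m \<le> real (n + 1) * real (n choose K) * real K ^ K * real m ^ m * real m"
      using max mpos by (intro mult_right_mono) auto
    also have "\<dots> = real (n + 1) * (real (n choose K) * real m) * real K ^ K * real m ^ m" by simp
    also have "\<dots> = real (n + 1) * real n * C * real K ^ K * real m ^ m" by (simp add: Cn[symmetric])
    finally show ?thesis using A0 xpos mpos by (intro mult_left_mono) auto
  qed
  also have "\<dots> \<le> A * (exp 1 * (x + real m)) * (real (n + 1) * real n * C * (exp 1 * x powr x) * real m ^ m)"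
    using A0 xpos mpos Cpos KK by (intro mult_left_mono mult_right_mono) auto
  also have "\<dots> = (C * A) * (exp 1 * exp 1 * (x + real m) * real (n + 1) * real n) * (real m ^ m * x powr x)"
    by (simp add: algebra_simps)
  finally have main: "f13 p (1 - b) ^ m * real m * (real m ^ m * x powr x)
      \<le> (C * A) * (exp 1 * exp 1 * (x + real m) * real (n + 1) * real n) * (real m ^ m * x powr x)"
    by (simp add: algebra_simps)
  have pos: "real m ^ m * x powr x > 0" using mpos xpos by simp
  have main2: "f13 p (1 - b) ^ m * real m \<le> (C * A) * (exp 1 * exp 1 * (x + real m) * real (n + 1) * real n)"
    using main pos by (simp add: mult_le_cancel_right)
  have "exp 1 * exp 1 * (x + real m) * real (n + 1) * real n \<le> exp 2 * (2 * real m) * (2 * real m + 1) * (2 * real m)"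
  proof -
    have "exp 1 * exp 1 = exp (2::real)" by (simp add: exp_add[symmetric])
    moreover have "x + real m \<le> 2 * real m" "real (n + 1) \<le> 2 * real m + 1" "real n \<le> 2 * real m"
      using xm Km by (auto simp: n_def)
    ultimately show ?thesis using xpos by (simp only:) (intro mult_mono, auto)
  qed
  then have "(C * A) * (exp 1 * exp 1 * (x + real m) * real (n + 1) * real n) \<le> (C * A) * (exp 2 * (2 * real m) * (2 * real m + 1) * (2 * real m))"
    using Cpos A0 by (intro mult_left_mono) auto
  also have "\<dots> = (Q m * (C * A)) * real m" by (simp add: Q_def algebra_simps)
  finally have "f13 p (1 - b) ^ m * real m \<le> (Q m * (C * A)) * real m" using main2 by simp
  then have "f13 p (1 - b) ^ m \<le> Q m * (C * A)" using mpos by (simp add: mult_le_cancel_right)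
  then show ?thesis using P by (simp add: A_def K_def x_def mult.assoc)
qed



lemma partA: "\<exists>C::real. \<forall>p::real. 0 < p \<and> p < 1 \<longrightarrow>
        (\<forall>a::real. \<forall>m::nat. 2 - 1 / p \<le> a \<and> a \<le> 1 \<and> 0 < m \<longrightarrow>
           measure_pmf.prob (Ysum_pmf p m) {s. s \<ge> a * real m}
             \<le> C * real m * (f13 p a) ^ m)"
proof (intro exI[of _ 1] allI impI, elim conjE)
  fix p a :: real and m :: nat
  assume p: "0 < p" "p < 1" and a: "2 - 1 / p \<le> a" "a \<le> 1" and m: "0 < m"
  define b where "b = 1 - a"
  have b0: "b \<ge> 0" using a by (simp add: b_def)
  have bp: "b \<le> (1 - p) / p" using a p by (simp add: b_def diff_divide_distrib)
  have ab: "a = 1 - b" by (simp add: b_def)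
  have "measure_pmf.prob (Ysum_pmf p m) {s. s \<ge> a * real m}
      = measure_pmf.prob (neg_binomial_pmf m p) {..nat \<lfloor>b * real m\<rfloor>}"
    unfolding prob_eq b_def[symmetric] using b0 by (subst set_floor) auto
  also have "\<dots> \<le> f13 p a ^ m"
  proof (cases "b = 0")
    case True
    have "f13 p 1 = p" using p by (simp add: f13_def pow0_def)
    then show ?thesis using True p
      by (simp add: ab measure_pmf_single pmf_neg_binomial)
  next
    case False
    then show ?thesis unfolding ab using upper_main[OF p _ bp] b0 by simp
  qed
  also have "\<dots> \<le> 1 * real m * f13 p a ^ m"
    using m f13_nonneg[OF p(1), of a] by (simp add: mult_le_cancel_right1)
  finally show "measure_pmf.prob (Ysum_pmf p m) {s. s \<ge> a * real m} \<le> 1 * real m * f13 p a ^ m" .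
qed

lemma f13_bounds:
  assumes p: "0 < p" "p < 1" and b: "0 \<le> b" "b \<le> 1"
  shows "p * (1 - p) \<le> f13 p (1 - b)" "f13 p (1 - b) \<le> 12"
proof -
  have e: "f13 p (1 - b) = (1 + b) powr (1 + b) * p * (1 - p) powr b * pow0 b (- b)"
    by (rule f13_eq) (use p b in auto)
  have t1: "1 \<le> (1 + b) powr (1 + b)" using b by (intro ge_one_powr_ge_zero) auto
  have t1': "(1 + b) powr (1 + b) \<le> 2 powr 2" using b by (intro powr_mono_both) auto
  have t3: "(1 - p) \<le> (1 - p) powr b"
    using powr_mono'[of b 1 "1 - p"] p b by simp
  have t3': "(1 - p) powr b \<le> 1" using powr_mono'[of 0 b "1 - p"] p b by simp
  have t4: "1 \<le> pow0 b (- b)"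
  proof (cases "b = 0")
    case False
    then have "b powr b \<le> 1 powr b" using b by (intro powr_mono2) auto
    moreover have "b powr b > 0" using False b by simp
    ultimately show ?thesis using False b by (simp add: pow0_def powr_minus field_simps)
  qed (simp add: pow0_def)
  have t4': "pow0 b (- b) \<le> 3"
  proof (cases "b = 0")
    case False
    then have bpos: "b > 0" using b by simp
    have "pow0 b (- b) = exp (- (b * ln b))" using bpos by (simp add: pow0_def powr_def)
    also have "\<dots> \<le> exp 1" using xlnx_ge[OF bpos] bpos by simp
    also have "\<dots> \<le> 3" using exp_le by simp
    finally show ?thesis .
  qed (simp add: pow0_def)
  have "p * (1 - p) = 1 * p * (1 - p) * 1" by simp
  also have "\<dots> \<le> f13 p (1 - b)" unfolding e
    using t1 t3 t4 p by (intro mult_mono) auto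
  finally show "p * (1 - p) \<le> f13 p (1 - b)" .
  have "f13 p (1 - b) \<le> 2 powr 2 * 1 * 1 * 3" unfolding e
    using t1' t3' t4' t1 t4 p by (intro mult_mono) auto
  also have "\<dots> = 12" by simp
  finally show "f13 p (1 - b) \<le> 12" .
qed

definition cc :: "nat \<Rightarrow> real" where
  "cc m = exp (- (ln (12 * exp 2) / real m + 2 * (ln (real m) / real m)))"

lemma cc_lim: "cc \<longlonglongrightarrow> 1"
proof -
  have "(\<lambda>m. - (ln (12 * exp 2) / real m + 2 * (ln (real m) / real m))) \<longlonglongrightarrow> - (0 + 2 * 0)"
    by (intro tendsto_intros lim_const_over_n lim_ln_over_n)
  then have "cc \<longlonglongrightarrow> exp (- (0 + 2 * 0))" unfolding cc_def by (intro tendsto_intros)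
  then show ?thesis by simp
qed

lemma cc_props: assumes "m \<ge> 1"
  shows "0 < cc m" "cc m \<le> 1" "cc m ^ m * (12 * exp 2 * real m ^ 2) = 1"
proof -
  show "0 < cc m" by (simp add: cc_def)
  have "ln 12 > (0::real)" by (rule ln_gt_zero) simp
  moreover have "ln (12 * exp 2) = ln 12 + (2::real)" by (simp add: ln_mult)
  ultimately have "ln (12 * exp 2) > (0::real)" by linarith
  then have "0 \<le> ln (12 * exp 2) / real m" by simp
  moreover have "0 \<le> ln (real m) / real m" using assms by simp
  ultimately have "- (ln (12 * exp 2) / real m + 2 * (ln (real m) / real m)) \<le> 0" by linarith
  then show "cc m \<le> 1" by (simp add: cc_def)
  have mp: "real m > 0" using assms by simp
  have "cc m ^ m = exp (real m * - (ln (12 * exp 2) / real m + 2 * (ln (real m) / real m)))"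
    by (simp add: cc_def exp_of_nat_mult)
  also have "real m * - (ln (12 * exp 2) / real m + 2 * (ln (real m) / real m)) = - ln (12 * exp 2 * real m ^ 2)"
    using mp by (simp add: field_simps ln_mult ln_realpow)
  also have "exp \<dots> = 1 / (12 * exp 2 * real m ^ 2)" using mp by (simp add: exp_minus inverse_eq_divide)
  finally show "cc m ^ m * (12 * exp 2 * real m ^ 2) = 1" using mp by simp
qed

lemma Q_le: assumes that: "m \<ge> 1" shows "Q m \<le> 12 * exp 2 * real m ^ 2"
proof -
  have "real m * (2 * real m + 1) \<le> real m * (3 * real m)" using that by (intro mult_left_mono) auto
  then have "4 * exp 2 * (real m * (2 * real m + 1)) \<le> 4 * exp 2 * (real m * (3 * real m))"
    by (intro mult_left_mono) (use that in auto)
  then show ?thesis using that by (simp add: Q_def power2_eq_square algebra_simps)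
qed

lemma partB: assumes p: "0 < p" "p < 1"
  shows "\<exists>\<epsilon>::nat \<Rightarrow> real. \<epsilon> \<longlonglongrightarrow> 0 \<and>
           (\<forall>\<^sub>F m in sequentially. \<forall>a::real. 0 \<le> a \<and> a \<le> 1 \<longrightarrow>
              measure_pmf.prob (Ysum_pmf p m) {s. s \<ge> a * real m}
                \<ge> (f13 p a - \<epsilon> m) ^ m)"
proof (intro exI[of _ "\<lambda>m. 12 * (1 - cc m)"] conjI)
  show lim: "(\<lambda>m. 12 * (1 - cc m)) \<longlonglongrightarrow> 0"
    using tendsto_mult[OF tendsto_const[of 12] tendsto_diff[OF tendsto_const[of 1] cc_lim]] by simp
  have ev1: "\<forall>\<^sub>F m in sequentially. 12 * (1 - cc m) \<le> p * (1 - p)"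
    using order_tendstoD(2)[OF lim, of "p * (1 - p)"] p by (auto elim: eventually_mono)
  have ev2: "\<forall>\<^sub>F m in sequentially. m \<ge> 1" by (rule eventually_ge_at_top)
  show "\<forall>\<^sub>F m in sequentially. \<forall>a::real. 0 \<le> a \<and> a \<le> 1 \<longrightarrow>
              measure_pmf.prob (Ysum_pmf p m) {s. s \<ge> a * real m} \<ge> (f13 p a - 12 * (1 - cc m)) ^ m"
    using ev1 ev2
  proof eventually_elim
    case (elim m)
    show ?case
    proof (intro allI impI, elim conjE)
      fix a :: real assume a: "0 \<le> a" "a \<le> 1"
      define b where "b = 1 - a"
      have b: "0 \<le> b" "b \<le> 1" using a by (auto simp: b_def)
      have ab: "a = 1 - b" by (simp add: b_def)
      define f where "f = f13 p a"
      have fb: "p * (1 - p) \<le> f" "f \<le> 12" using f13_bounds[OF p b] by (auto simp: f_def ab)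
      have c: "0 < cc m" "cc m \<le> 1" "cc m ^ m * (12 * exp 2 * real m ^ 2) = 1" using cc_props elim(2) by auto
      define K where "K = nat \<lfloor>b * real m\<rfloor>"
      have "measure_pmf.prob (Ysum_pmf p m) {s. s \<ge> a * real m}
          = measure_pmf.prob (neg_binomial_pmf m p) {..K}"
        unfolding prob_eq b_def[symmetric] K_def using b by (subst set_floor) auto
      also have "\<dots> \<ge> pmf (neg_binomial_pmf m p) K"
        by (simp add: measure_pmf_single[symmetric] measure_pmf.finite_measure_mono)
      finally have P: "pmf (neg_binomial_pmf m p) K \<le> measure_pmf.prob (Ysum_pmf p m) {s. s \<ge> a * real m}" .
      have L: "f ^ m \<le> Q m * pmf (neg_binomial_pmf m p) K"
        using lower_main[OF p b elim(2)] by (simp add: f_def ab K_def)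
      also have "\<dots> \<le> (12 * exp 2 * real m ^ 2) * pmf (neg_binomial_pmf m p) K"
        by (intro mult_right_mono Q_le elim(2)) simp
      finally have "cc m ^ m * f ^ m \<le> cc m ^ m * ((12 * exp 2 * real m ^ 2) * pmf (neg_binomial_pmf m p) K)"
        using c by (intro mult_left_mono) auto
      also have "\<dots> = (cc m ^ m * (12 * exp 2 * real m ^ 2)) * pmf (neg_binomial_pmf m p) K"
        by (simp add: mult.assoc)
      also have "\<dots> = pmf (neg_binomial_pmf m p) K" using c(3) by simp
      also have "cc m ^ m * f ^ m = (f * cc m) ^ m" by (simp add: power_mult_distrib mult.commute)
      finally have fc: "(f * cc m) ^ m \<le> pmf (neg_binomial_pmf m p) K" .
      have "(f - 12 * (1 - cc m)) ^ m \<le> (f * cc m) ^ m"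
      proof (rule power_mono)
        show "0 \<le> f - 12 * (1 - cc m)" using elim(1) fb by simp
        have "f * (1 - cc m) \<le> 12 * (1 - cc m)" using fb c by (intro mult_right_mono) auto
        then show "f - 12 * (1 - cc m) \<le> f * cc m" by (simp add: algebra_simps)
      qed
      then show "(f13 p a - 12 * (1 - cc m)) ^ m \<le> measure_pmf.prob (Ysum_pmf p m) {s. s \<ge> a * real m}"
        using fc P by (simp add: f_def)
    qed
  qed
qed

lemma f13_mean: assumes p: "1 / 2 \<le> p" "p < 1"
  shows "f13 p (2 - 1 / p) = 1"
proof -
  have p0: "0 < p" using p by simp
  define b where "b = (1 - p) / p"
  have bpos: "b > 0" using p by (simp add: b_def)
  have a: "2 - 1 / p = 1 - b" using p0 by (simp add: b_def field_simps)
  have lb: "ln b = ln (1 - p) - ln p" using p by (simp add: b_def ln_div)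
  have l1: "ln (1 + b) = - ln p" using p0 by (simp add: b_def field_simps ln_div)
  have "f13 p (2 - 1 / p) = (1 + b) powr (1 + b) * p * (1 - p) powr b * b powr (- b)"
    unfolding a using p0 p bpos by (simp add: f13_eq pow0_def)
  also have "\<dots> = exp ((1 + b) * ln (1 + b) + ln p + b * ln (1 - p) - b * ln b)"
    using p0 p bpos by (simp add: powr_def exp_add exp_diff exp_minus field_simps add_pos_pos)
  also have "(1 + b) * ln (1 + b) + ln p + b * ln (1 - p) - b * ln b = 0"
    unfolding lb l1 by (simp add: algebra_simps)
  finally show ?thesis by simp
qed

lemma partC: assumes p: "1 / 2 \<le> p" "p < 1"
  shows "\<exists>\<epsilon>::nat \<Rightarrow> real. \<epsilon> \<longlonglongrightarrow> 0 \<and>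
           (\<forall>\<^sub>F m in sequentially. \<forall>a::real. 0 \<le> a \<and> a \<le> 2 - 1 / p \<longrightarrow>
              measure_pmf.prob (Ysum_pmf p m) {s. s \<ge> a * real m}
                \<ge> (1 - \<epsilon> m) ^ m)"
proof -
  have p0: "0 < p" using p by simp
  obtain \<epsilon> where e: "\<epsilon> \<longlonglongrightarrow> 0" and ev: "\<forall>\<^sub>F m in sequentially. \<forall>a::real. 0 \<le> a \<and> a \<le> 1 \<longrightarrow>
              measure_pmf.prob (Ysum_pmf p m) {s. s \<ge> a * real m} \<ge> (f13 p a - \<epsilon> m) ^ m"
    using partB[OF p0 p(2)] by blast
  define a0 where "a0 = 2 - 1 / p"
  have a0: "0 \<le> a0" "a0 \<le> 1" using p p0 by (auto simp: a0_def field_simps)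
  show ?thesis
  proof (intro exI[of _ \<epsilon>] conjI e)
    show "\<forall>\<^sub>F m in sequentially. \<forall>a::real. 0 \<le> a \<and> a \<le> 2 - 1 / p \<longrightarrow>
              measure_pmf.prob (Ysum_pmf p m) {s. s \<ge> a * real m} \<ge> (1 - \<epsilon> m) ^ m"
      using ev
    proof eventually_elim
      case (elim m)
      show ?case
      proof (intro allI impI, elim conjE)
        fix a :: real assume a: "0 \<le> a" "a \<le> 2 - 1 / p"
        have "(1 - \<epsilon> m) ^ m \<le> measure_pmf.prob (Ysum_pmf p m) {s. s \<ge> a0 * real m}"
          using spec[OF elim, of a0] a0 f13_mean[OF p] by (simp add: a0_def)
        also have "\<dots> \<le> measure_pmf.prob (Ysum_pmf p m) {s. s \<ge> a * real m}"
        proof (rule measure_pmf.finite_measure_mono)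
          have "a * real m \<le> a0 * real m" using a by (intro mult_right_mono) (auto simp: a0_def)
          then show "{s. s \<ge> a0 * real m} \<subseteq> {s. s \<ge> a * real m}" by auto
        qed simp
        finally show "(1 - \<epsilon> m) ^ m \<le> measure_pmf.prob (Ysum_pmf p m) {s. s \<ge> a * real m}" .
      qed
    qed
  qed
qed

theorem lemma13:
  shows
   "(\<exists>C::real. \<forall>p::real. 0 < p \<and> p < 1 \<longrightarrow>
        (\<forall>a::real. \<forall>m::nat. 2 - 1 / p \<le> a \<and> a \<le> 1 \<and> 0 < m \<longrightarrow>
           measure_pmf.prob (Ysum_pmf p m) {s. s \<ge> a * real m}
             \<le> C * real m * (f13 p a) ^ m))
    \<and> (\<forall>p::real. 0 < p \<and> p < 1 \<longrightarrow>
        (\<exists>\<epsilon>::nat \<Rightarrow> real. \<epsilon> \<longlonglongrightarrow> 0 \<and>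
           (\<forall>\<^sub>F m in sequentially. \<forall>a::real. 0 \<le> a \<and> a \<le> 1 \<longrightarrow>
              measure_pmf.prob (Ysum_pmf p m) {s. s \<ge> a * real m}
                \<ge> (f13 p a - \<epsilon> m) ^ m)))
    \<and> (\<forall>p::real. 1 / 2 \<le> p \<and> p < 1 \<longrightarrow>
        (\<exists>\<epsilon>::nat \<Rightarrow> real. \<epsilon> \<longlonglongrightarrow> 0 \<and>
           (\<forall>\<^sub>F m in sequentially. \<forall>a::real. 0 \<le> a \<and> a \<le> 2 - 1 / p \<longrightarrow>
              measure_pmf.prob (Ysum_pmf p m) {s. s \<ge> a * real m}
                \<ge> (1 - \<epsilon> m) ^ m)))"
  using partA partB partC by blast


end
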